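(* Fix $\beta\ge1$ and let $\{X_i\}_{i\ge1}$, $W_n$, $\xi$, $\mathcal H$ and $\alpha$ be as in the context, with $\sup_{i\ge1}\mathbb E[|X_i|^{2+\alpha}]<\infty$. For $f\in\mathcal H$ and $k\ge1$ let $\xi_k:=f(W_k)-\mathbb E[f(W_k)]$. Then for every $f\in\mathcal H$ there exist positive constants $M_3,M_4$ such that for all $1\le j\le k$, $$\mathbb E[\xi_j\xi_k]\le M_3\Big(\frac jk\Big)^{1/2}+M_4\Big(\frac1k\Big)^{\alpha/2}.$$
   Context: Sub-linear expectation space $(\Omega,\mathscr H,\mathbb E)$: $(\Omega,\mathcal F)$ a measurable space, $\mathscr H$ a linear space of real measurable functions closed under $(X_1,\dots,X_n)\mapsto\varphi(X_1,\dots,X_n)$ for $\varphi\in C_{b,Lip}(\mathbb R^n)$ (bounded Lipschitz functions), and $\mathbb E:\mathscr H\to\mathbb R$ monotone, constant preserving, sub-additive and positively homogeneous; it is assumed $\mathbb E[X]=\sup_{P\in\mathcal P}E_P[X]$ for a family $\mathcal P$ of $\sigma$-additive probability measures. $(\widetilde\Omega,\widetilde{\mathscr H},\widetilde{\mathbb E})$ is another sub-linear expectation space. Both satisfy condition (A): for every $X$ and every sequence $f_n\in C_{b,Lip}(\mathbb R)$ with $f_n\downarrow0$, $\mathbb E[f_n(X)]\downarrow0$ (resp. $\widetilde{\mathbb E}[f_n(X)]\downarrow0$). Independence: $Y\in\mathscr H^n$ is independent of $X\in\mathscr H^m$ if $\mathbb E[\varphi(X,Y)]=\mathbb E\big[\mathbb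 E[\varphi(x,Y)]|_{x=X}\big]$ for all $\varphi\in C_{b,Lip}(\mathbb R^{m+n})$; $\{X_n\}$ is independent if $X_{n+1}$ is independent of $(X_1,\dots,X_n)$ for every $n$. Standing setting: $\{X_i\}$ is independent in $(\Omega,\mathscr H,\mathbb E)$ with $\mathbb E[X_i]=\mathbb E[-X_i]=0$, $\overline\sigma_i=\sqrt{\mathbb E[X_i^2]}$, $\underline\sigma_i=\sqrt{-\mathbb E[-X_i^2]}$, $\overline\sigma_i/\underline\sigma_i=\beta$ for all $i$, $0<\inf_i\underline\sigma_i^2\le\sup_i\overline\sigma_i^2<\infty$; $S_n=\sum_{i\le n}X_i$, $\sigma_i=(\underline\sigma_i+\overline\sigma_i)/2$, $B_n=\sqrt{\sum_{i\le n}\sigma_i^2}$, $W_n=S_n/B_n$. $\xi$ is $G$-normal under $\widetilde{\mathbb E}$ (for each $f\in C_{b,Lip}(\mathbb R)$, $u(t,x)=\widetilde{\mathbb E}[f(x+\sqrt t\xi)]$ is the unique viscosity solution of $\partial_tu-G(\partial_{xx}u)=0$, $u(0,\cdot)=f$, with $G(a)=\frac12\widetilde{\mathbb E}[a\xi^2]$), with $\sqrt{\widetilde{\mathbb E}[\xi^2]}=\frac{2\beta}{1+\beta}$, $\sqrt{-\widetilde{\mathbb E}[-\xi^2]}=\frac{2}{1+\beta}$. $\mathcal H:=\{f\in C_{b,Lip}(\mathbb R):\widetilde{\mathbb E}[f(\xi)]=-\widetilde{\mathbb E}[-f(\xi)]\}$. $\alpha\in(0,1)$ is the constant from Song's theorem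 (cited): there exist $\alpha\in(0,1)$ depending on $\beta$ and $C_{\alpha,\beta}>0$ such that for every such sequence and every $n$, $\sup_{|f|_{Lip}\le1}|\mathbb E[f(W_n)]-\widetilde{\mathbb E}[f(\xi)]|\le C_{\alpha,\beta}\sup_{1\le i\le n}\{\frac{\mathbb E[|X_i|^{2+\alpha}]}{\sigma_i^{2+\alpha}}(\frac{\sigma_i}{B_n})^\alpha\}$. *)

theory Defs
  imports "HOL-Probability.Probability"
begin

definition cbl1 :: "(real \<Rightarrow> real) \<Rightarrow> bool" where
  "cbl1 f \<longleftrightarrow> bounded (range f) \<and> (\<exists>L. L-lipschitz_on UNIV f)"

text \<open>C_{b,Lip}(R^n): a function of a vector x :: nat => real which is bounded and
  Lipschitz w.r.t. the Euclidean distance of the first n coordinates (so it only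
  depends on x 0, ..., x (n-1)).\<close>
definition cbl :: "nat \<Rightarrow> ((nat \<Rightarrow> real) \<Rightarrow> real) \<Rightarrow> bool" where
  "cbl n \<phi> \<longleftrightarrow> (\<exists>B. \<forall>x. \<bar>\<phi> x\<bar> \<le> B) \<and>
     (\<exists>L. \<forall>x y. \<bar>\<phi> x - \<phi> y\<bar> \<le> L * sqrt (\<Sum>i<n. (x i - y i)\<^sup>2))"

definition sublinear_expectation_space ::
  "'w measure \<Rightarrow> ('w \<Rightarrow> real) set \<Rightarrow> (('w \<Rightarrow> real) \<Rightarrow> real) \<Rightarrow> bool" where
  "sublinear_expectation_space M H E \<longleftrightarrow>
     space M = UNIV \<and>
     H \<subseteq> borel_measurable M \<and>
     (\<lambda>_. 0) \<in> H \<and>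
     (\<forall>X\<in>H. \<forall>Y\<in>H. (\<lambda>w. X w + Y w) \<in> H) \<and>
     (\<forall>X\<in>H. \<forall>c::real. (\<lambda>w. c * X w) \<in> H) \<and>
     (\<forall>n X \<phi>. (\<forall>i<n. X i \<in> H) \<and> cbl n \<phi> \<longrightarrow> (\<lambda>w. \<phi> (\<lambda>i. X i w)) \<in> H) \<and>
     (\<forall>X\<in>H. \<forall>Y\<in>H. (\<forall>w. X w \<le> Y w) \<longrightarrow> E X \<le> E Y) \<and>
     (\<forall>c. E (\<lambda>_. c) = c) \<and>
     (\<forall>X\<in>H. \<forall>Y\<in>H. E (\<lambda>w. X w + Y w) \<le> E X + E Y) \<and>
     (\<forall>X\<in>H. \<forall>c\<ge>0. E (\<lambda>w. c * X w) = c * E X) \<and>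
     (\<exists>\<P>. \<P> \<noteq> {} \<and>
        (\<forall>P\<in>\<P>. prob_space P \<and> space P = space M \<and> sets P = sets M) \<and>
        (\<forall>X\<in>H. (\<forall>P\<in>\<P>. integrable P X) \<and>
                bdd_above ((\<lambda>P. integral\<^sup>L P X) ` \<P>) \<and>
                E X = (SUP P\<in>\<P>. integral\<^sup>L P X)))"

definition condition_A :: "('w \<Rightarrow> real) set \<Rightarrow> (('w \<Rightarrow> real) \<Rightarrow> real) \<Rightarrow> bool" where
  "condition_A H E \<longleftrightarrow>
     (\<forall>X\<in>H. \<forall>f :: nat \<Rightarrow> real \<Rightarrow> real.
        (\<forall>n. cbl1 (f n)) \<and> (\<forall>n x. f (Suc n) x \<le> f n x) \<and> (\<forall>x. (\<lambda>n. f n x) \<longlonglongrightarrow> 0)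
        \<longrightarrow> (\<lambda>n. E (\<lambda>w. f n (X w))) \<longlonglongrightarrow> 0)"

text \<open>Independence of the sequence X 1, X 2, ...: X (n+1) is independent of
  (X 1, ..., X n) for every n \<ge> 1.  The vector argument of \<phi> has coordinate i
  equal to X (i+1).\<close>
definition indep_seq :: "(('w \<Rightarrow> real) \<Rightarrow> real) \<Rightarrow> (nat \<Rightarrow> 'w \<Rightarrow> real) \<Rightarrow> bool" where
  "indep_seq E X \<longleftrightarrow>
     (\<forall>n\<ge>1. \<forall>\<phi>. cbl (Suc n) \<phi> \<longrightarrow>
        E (\<lambda>w. \<phi> (\<lambda>i. X (Suc i) w)) =
        E (\<lambda>w. E (\<lambda>w'. \<phi> (\<lambda>i. if i < n then X (Suc i) w else X (Suc n) w'))))"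

definition C12_test ::
  "(real \<Rightarrow> real \<Rightarrow> real) \<Rightarrow> (real \<Rightarrow> real \<Rightarrow> real) \<Rightarrow> (real \<Rightarrow> real \<Rightarrow> real)
   \<Rightarrow> (real \<Rightarrow> real \<Rightarrow> real) \<Rightarrow> bool" where
  "C12_test \<phi> \<phi>t \<phi>x \<phi>xx \<longleftrightarrow>
     (\<forall>s y. ((\<lambda>s'. \<phi> s' y) has_real_derivative \<phi>t s y) (at s)) \<and>
     (\<forall>s y. ((\<lambda>y'. \<phi> s y') has_real_derivative \<phi>x s y) (at y)) \<and>
     (\<forall>s y. ((\<lambda>y'. \<phi>x s y') has_real_derivative \<phi>xx s y) (at y)) \<and>
     continuous_on UNIV (\<lambda>(s,y). \<phi>t s y) \<and>
     continuous_on UNIV (\<lambda>(s,y). \<phi>x s y) \<and>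
     continuous_on UNIV (\<lambda>(s,y). \<phi>xx s y)"

definition viscosity_solution ::
  "(real \<Rightarrow> real) \<Rightarrow> (real \<Rightarrow> real) \<Rightarrow> (real \<Rightarrow> real \<Rightarrow> real) \<Rightarrow> bool" where
  "viscosity_solution G f u \<longleftrightarrow>
     continuous_on ({0..} \<times> UNIV) (\<lambda>(t,x). u t x) \<and>
     (\<forall>x. u 0 x = f x) \<and>
     (\<forall>t x \<phi> \<phi>t \<phi>x \<phi>xx. t > 0 \<and> C12_test \<phi> \<phi>t \<phi>x \<phi>xx \<and> \<phi> t x = u t x \<and>
        (\<exists>r>0. \<forall>s y. \<bar>s - t\<bar> < r \<and> \<bar>y - x\<bar> < r \<longrightarrow> u s y \<le> \<phi> s y)
        \<longrightarrow> \<phi>t t x - G (\<phi>xx t x) \<le> 0) \<and>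
     (\<forall>t x \<phi> \<phi>t \<phi>x \<phi>xx. t > 0 \<and> C12_test \<phi> \<phi>t \<phi>x \<phi>xx \<and> \<phi> t x = u t x \<and>
        (\<exists>r>0. \<forall>s y. \<bar>s - t\<bar> < r \<and> \<bar>y - x\<bar> < r \<longrightarrow> \<phi> s y \<le> u s y)
        \<longrightarrow> \<phi>t t x - G (\<phi>xx t x) \<ge> 0)"

definition G_normal :: "(('v \<Rightarrow> real) \<Rightarrow> real) \<Rightarrow> ('v \<Rightarrow> real) \<Rightarrow> bool" where
  "G_normal E \<xi> \<longleftrightarrow>
     (\<forall>f. cbl1 f \<longrightarrow>
        viscosity_solution (\<lambda>a. E (\<lambda>w. a * (\<xi> w)\<^sup>2) / 2) f
          (\<lambda>t x. E (\<lambda>w. f (x + sqrt t * \<xi> w))))"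

definition sig_up :: "(('w \<Rightarrow> real) \<Rightarrow> real) \<Rightarrow> (nat \<Rightarrow> 'w \<Rightarrow> real) \<Rightarrow> nat \<Rightarrow> real" where
  "sig_up E X i = sqrt (E (\<lambda>w. (X i w)\<^sup>2))"

definition sig_lo :: "(('w \<Rightarrow> real) \<Rightarrow> real) \<Rightarrow> (nat \<Rightarrow> 'w \<Rightarrow> real) \<Rightarrow> nat \<Rightarrow> real" where
  "sig_lo E X i = sqrt (- E (\<lambda>w. - (X i w)\<^sup>2))"

definition sig :: "(('w \<Rightarrow> real) \<Rightarrow> real) \<Rightarrow> (nat \<Rightarrow> 'w \<Rightarrow> real) \<Rightarrow> nat \<Rightarrow> real" where
  "sig E X i = (sig_lo E X i + sig_up E X i) / 2"

definition Bn :: "(('w \<Rightarrow> real) \<Rightarrow> real) \<Rightarrow> (nat \<Rightarrow> 'w \<Rightarrow> real) \<Rightarrow> nat \<Rightarrow> real" where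
  "Bn E X n = sqrt (\<Sum>i=1..n. (sig E X i)\<^sup>2)"

definition Wn :: "(('w \<Rightarrow> real) \<Rightarrow> real) \<Rightarrow> (nat \<Rightarrow> 'w \<Rightarrow> real) \<Rightarrow> nat \<Rightarrow> 'w \<Rightarrow> real" where
  "Wn E X n = (\<lambda>w. (\<Sum>i=1..n. X i w) / Bn E X n)"

end

theory Submission
  imports Defs
begin


locale sle =
  fixes M :: "'w measure" and H :: "('w \<Rightarrow> real) set" and E :: "('w \<Rightarrow> real) \<Rightarrow> real"
  assumes sp: "sublinear_expectation_space M H E"
begin

lemma H_add: "X \<in> H \<Longrightarrow> Y \<in> H \<Longrightarrow> (\<lambda>w. X w + Y w) \<in> H"
  using sp[unfolded sublinear_expectation_space_def, THEN conjunct2, THEN conjunct2, THEN conjunct2, THEN conjunct1] by blast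
lemma H_scale: "X \<in> H \<Longrightarrow> (\<lambda>w. c * X w) \<in> H"
  using sp[unfolded sublinear_expectation_space_def, THEN conjunct2, THEN conjunct2, THEN conjunct2, THEN conjunct2, THEN conjunct1] by blast
lemma H_cbl: "(\<And>i. i < n \<Longrightarrow> X i \<in> H) \<Longrightarrow> cbl n \<phi> \<Longrightarrow> (\<lambda>w. \<phi> (\<lambda>i. X i w)) \<in> H"
  using sp[unfolded sublinear_expectation_space_def, THEN conjunct2, THEN conjunct2, THEN conjunct2, THEN conjunct2, THEN conjunct2, THEN conjunct1] by blast
lemma E_mono: "X \<in> H \<Longrightarrow> Y \<in> H \<Longrightarrow> (\<And>w. X w \<le> Y w) \<Longrightarrow> E X \<le> E Y"
  using sp[unfolded sublinear_expectation_space_def, THEN conjunct2, THEN conjunct2, THEN conjunct2, THEN conjunct2, THEN conjunct2, THEN conjunct2, THEN conjunct1] by blast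
lemma E_const: "E (\<lambda>_. c) = c"
  using sp[unfolded sublinear_expectation_space_def, THEN conjunct2, THEN conjunct2, THEN conjunct2, THEN conjunct2, THEN conjunct2, THEN conjunct2, THEN conjunct2, THEN conjunct1] by blast
lemma E_subadd: "X \<in> H \<Longrightarrow> Y \<in> H \<Longrightarrow> E (\<lambda>w. X w + Y w) \<le> E X + E Y"
  using sp[unfolded sublinear_expectation_space_def, THEN conjunct2, THEN conjunct2, THEN conjunct2, THEN conjunct2, THEN conjunct2, THEN conjunct2, THEN conjunct2, THEN conjunct2, THEN conjunct1] by blast
lemma E_poshom: "X \<in> H \<Longrightarrow> c \<ge> 0 \<Longrightarrow> E (\<lambda>w. c * X w) = c * E X"
  using sp[unfolded sublinear_expectation_space_def, THEN conjunct2, THEN conjunct2, THEN conjunct2, THEN conjunct2, THEN conjunct2, THEN conjunct2, THEN conjunct2, THEN conjunct2, THEN conjunct2, THEN conjunct1] by blast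

lemma H_const: "(\<lambda>_. c) \<in> H"
proof -
  have "cbl 0 (\<lambda>_. c)" unfolding cbl_def by auto
  from H_cbl[of 0 "\<lambda>_ _. 0", OF _ this] show ?thesis by simp
qed

lemma H_neg: "X \<in> H \<Longrightarrow> (\<lambda>w. - X w) \<in> H"
  using H_scale[of X "-1"] by simp
lemma H_diff: "X \<in> H \<Longrightarrow> Y \<in> H \<Longrightarrow> (\<lambda>w. X w - Y w) \<in> H"
  using H_add[OF _ H_neg[of Y], of X] by simp
lemma H_addc: "X \<in> H \<Longrightarrow> (\<lambda>w. X w + c) \<in> H"
  using H_add[OF _ H_const] by simp

lemma E_add_const: assumes "X \<in> H" shows "E (\<lambda>w. X w + c) = E X + c"
proof -
  have 1: "E (\<lambda>w. X w + c) \<le> E X + c" using E_subadd[OF assms H_const, of c] E_const by simp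
  have 2: "E (\<lambda>w. (X w + c) + (-c)) \<le> E (\<lambda>w. X w + c) + E (\<lambda>_. -c)"
    by (rule E_subadd[OF H_addc[OF assms] H_const])
  have "E X \<le> E (\<lambda>w. X w + c) + (-c)" using 2 E_const[of "-c"] by simp
  then show ?thesis using 1 by simp
qed

lemma E_diff: assumes "X \<in> H" "Y \<in> H" shows "E X - E Y \<le> E (\<lambda>w. X w - Y w)"
proof -
  have "E X = E (\<lambda>w. (X w - Y w) + Y w)" by simp
  also have "\<dots> \<le> E (\<lambda>w. X w - Y w) + E Y" using E_subadd[OF H_diff[OF assms] assms(2)] by simp
  finally show ?thesis by simp
qed

lemma E_bound: assumes "X \<in> H" "\<And>w. \<bar>X w\<bar> \<le> c" shows "\<bar>E X\<bar> \<le> c"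
proof -
  have "E X \<le> E (\<lambda>_. c)"
  proof (rule E_mono[OF assms(1) H_const])
    fix w show "X w \<le> c" using assms(2)[of w] by linarith
  qed
  moreover have "E (\<lambda>_. -c) \<le> E X"
  proof (rule E_mono[OF H_const assms(1)])
    fix w show "- c \<le> X w" using assms(2)[of w] by linarith
  qed
  ultimately show ?thesis using E_const by (simp add: abs_le_iff)
qed

lemma E_lip: assumes "X \<in> H" "Y \<in> H" "\<And>w. \<bar>X w - Y w\<bar> \<le> c" shows "\<bar>E X - E Y\<bar> \<le> c"
proof -
  have "E X \<le> E (\<lambda>w. Y w + c)"
  proof (rule E_mono[OF assms(1) H_addc[OF assms(2)]])
    fix w show "X w \<le> Y w + c" using assms(3)[of w] by linarith
  qed
  hence 1: "E X \<le> E Y + c" using E_add_const[OF assms(2)] by simp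
  have "E Y \<le> E (\<lambda>w. X w + c)"
  proof (rule E_mono[OF assms(2) H_addc[OF assms(1)]])
    fix w show "Y w \<le> X w + c" using assms(3)[of w] by linarith
  qed
  hence 2: "E Y \<le> E X + c" using E_add_const[OF assms(1)] by simp
  from 1 2 show ?thesis by linarith
qed

lemma E_scale_any: assumes "X \<in> H" shows "E (\<lambda>w. c * X w) = (if c \<ge> 0 then c * E X else (-c) * E (\<lambda>w. - X w))"
proof (cases "c \<ge> 0")
  case True then show ?thesis using E_poshom[OF assms] by simp
next
  case False
  have "E (\<lambda>w. c * X w) = E (\<lambda>w. (-c) * (- X w))" by simp
  also have "\<dots> = (-c) * E (\<lambda>w. - X w)" using E_poshom[OF H_neg[OF assms], of "-c"] False by simp
  finally show ?thesis using False by simp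
qed

end


definition nrm :: "nat \<Rightarrow> (nat \<Rightarrow> real) \<Rightarrow> (nat \<Rightarrow> real) \<Rightarrow> real" where
  "nrm n x y = sqrt (\<Sum>i<n. (x i - y i)\<^sup>2)"

lemma nrm_nonneg: "nrm n x y \<ge> 0" unfolding nrm_def by (simp add: sum_nonneg)

lemma cbl_iff: "cbl n \<phi> \<longleftrightarrow> (\<exists>B. \<forall>x. \<bar>\<phi> x\<bar> \<le> B) \<and> (\<exists>L\<ge>0. \<forall>x y. \<bar>\<phi> x - \<phi> y\<bar> \<le> L * nrm n x y)"
proof
  assume "cbl n \<phi>"
  then obtain B L where B: "\<forall>x. \<bar>\<phi> x\<bar> \<le> B" and L: "\<forall>x y. \<bar>\<phi> x - \<phi> y\<bar> \<le> L * nrm n x y"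
    unfolding cbl_def nrm_def by blast
  have "\<forall>x y. \<bar>\<phi> x - \<phi> y\<bar> \<le> max L 0 * nrm n x y"
  proof (intro allI)
    fix x y show "\<bar>\<phi> x - \<phi> y\<bar> \<le> max L 0 * nrm n x y"
      using L[rule_format, of x y] mult_right_mono[OF max.cobounded1[of L 0] nrm_nonneg[of n x y]] by linarith
  qed
  then show "(\<exists>B. \<forall>x. \<bar>\<phi> x\<bar> \<le> B) \<and> (\<exists>L\<ge>0. \<forall>x y. \<bar>\<phi> x - \<phi> y\<bar> \<le> L * nrm n x y)"
  proof (intro conjI)
    show "\<exists>B. \<forall>x. \<bar>\<phi> x\<bar> \<le> B" using B by blast
  qed (rule exI[of _ "max L 0"], simp)
next
  assume "(\<exists>B. \<forall>x. \<bar>\<phi> x\<bar> \<le> B) \<and> (\<exists>L\<ge>0. \<forall>x y. \<bar>\<phi> x - \<phi> y\<bar> \<le> L * nrm n x y)"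
  then show "cbl n \<phi>" unfolding cbl_def nrm_def by blast
qed

lemma cblI: "(\<And>x. \<bar>\<phi> x\<bar> \<le> B) \<Longrightarrow> L \<ge> 0 \<Longrightarrow> (\<And>x y. \<bar>\<phi> x - \<phi> y\<bar> \<le> L * nrm n x y) \<Longrightarrow> cbl n \<phi>"
  unfolding cbl_iff by blast

lemma cblE: assumes "cbl n \<phi>"
  obtains B L where "B \<ge> 0" "L \<ge> 0" "\<And>x. \<bar>\<phi> x\<bar> \<le> B" "\<And>x y. \<bar>\<phi> x - \<phi> y\<bar> \<le> L * nrm n x y"
proof -
  from assms obtain B L where "\<forall>x. \<bar>\<phi> x\<bar> \<le> B" "L \<ge> 0" "\<forall>x y. \<bar>\<phi> x - \<phi> y\<bar> \<le> L * nrm n x y"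
    unfolding cbl_iff by blast
  moreover have "B \<ge> 0" using \<open>\<forall>x. \<bar>\<phi> x\<bar> \<le> B\<close> by (meson abs_ge_zero order.trans)
  ultimately show ?thesis using that by blast
qed

lemma nrm_mono: "n \<le> m \<Longrightarrow> nrm n x y \<le> nrm m x y"
  unfolding nrm_def by (intro real_sqrt_le_mono sum_mono2) auto

lemma cbl_mono: assumes "cbl n \<phi>" "n \<le> m" shows "cbl m \<phi>"
proof -
  obtain B L where "L \<ge> 0" "\<And>x. \<bar>\<phi> x\<bar> \<le> B" "\<And>x y. \<bar>\<phi> x - \<phi> y\<bar> \<le> L * nrm n x y"
    using cblE[OF assms(1)] by metis
  then show ?thesis
  proof (intro cblI[of _ B L])
    fix x y
    have "L * nrm n x y \<le> L * nrm m x y" by (rule mult_left_mono[OF nrm_mono[OF assms(2)] \<open>L \<ge> 0\<close>])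
    then show "\<bar>\<phi> x - \<phi> y\<bar> \<le> L * nrm m x y" using \<open>\<And>x y. \<bar>\<phi> x - \<phi> y\<bar> \<le> L * nrm n x y\<close>[of x y] by linarith
  qed
qed

lemma cbl_lowdep: assumes "cbl n \<phi>" "\<And>i. i < n \<Longrightarrow> x i = y i" shows "\<phi> x = \<phi> y"
proof -
  obtain B L where "\<And>x y. \<bar>\<phi> x - \<phi> y\<bar> \<le> L * nrm n x y"
    using cblE[OF assms(1)] by metis
  moreover have "nrm n x y = 0" unfolding nrm_def using assms(2) by simp
  ultimately show ?thesis using  \<open>\<And>x y. \<bar>\<phi> x - \<phi> y\<bar> \<le> L * nrm n x y\<close>[of x y] by simp
qed

lemma coord_le_nrm: "i < n \<Longrightarrow> \<bar>x i - y i\<bar> \<le> nrm n x y"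
proof -
  assume "i < n"
  have "\<bar>x i - y i\<bar> = sqrt ((x i - y i)\<^sup>2)" by simp
  also have "\<dots> \<le> nrm n x y" unfolding nrm_def
    by (intro real_sqrt_le_mono member_le_sum) (use \<open>i < n\<close> in auto)
  finally show ?thesis .
qed

lemma sum_le_nrm: assumes "A \<subseteq> {..<n}"
  shows "\<bar>(\<Sum>i\<in>A. x i) - (\<Sum>i\<in>A. y i)\<bar> \<le> real n * nrm n x y"
proof -
  have fin: "finite A" using assms finite_subset by blast
  have "\<bar>(\<Sum>i\<in>A. x i) - (\<Sum>i\<in>A. y i)\<bar> = \<bar>\<Sum>i\<in>A. x i - y i\<bar>" by (simp add: sum_subtractf)
  also have "\<dots> \<le> (\<Sum>i\<in>A. \<bar>x i - y i\<bar>)" by (rule sum_abs)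
  also have "\<dots> \<le> (\<Sum>i\<in>A. nrm n x y)" using assms by (intro sum_mono coord_le_nrm) auto
  also have "\<dots> = real (card A) * nrm n x y" by simp
  also have "\<dots> \<le> real n * nrm n x y"
    using card_mono[OF _ assms] nrm_nonneg by (intro mult_right_mono) auto
  finally show ?thesis .
qed

lemma cbl_comp_lin:
  assumes "A \<subseteq> {..<n}" "\<And>t. \<bar>g t\<bar> \<le> B" "L \<ge> 0" "\<And>s t. \<bar>g s - g t\<bar> \<le> L * \<bar>s - t\<bar>"
  shows "cbl n (\<lambda>v. g (c * (\<Sum>i\<in>A. v i)))"
proof (rule cblI[of _ B "L * \<bar>c\<bar> * real n"])
  fix x y
  have "\<bar>g (c * (\<Sum>i\<in>A. x i)) - g (c * (\<Sum>i\<in>A. y i))\<bar> \<le> L * \<bar>c * (\<Sum>i\<in>A. x i) - c * (\<Sum>i\<in>A. y i)\<bar>"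
    by (rule assms(4))
  also have "\<dots> = L * \<bar>c\<bar> * \<bar>(\<Sum>i\<in>A. x i) - (\<Sum>i\<in>A. y i)\<bar>"
    by (simp add: abs_mult right_diff_distrib[symmetric])
  also have "\<dots> \<le> L * \<bar>c\<bar> * (real n * nrm n x y)"
    by (intro mult_left_mono sum_le_nrm assms) (use assms in auto)
  finally show "\<bar>g (c * (\<Sum>i\<in>A. x i)) - g (c * (\<Sum>i\<in>A. y i))\<bar> \<le> L * \<bar>c\<bar> * real n * nrm n x y"
    by (simp add: mult.assoc)
qed (use assms in auto)

lemma cbl_const: "cbl n (\<lambda>_. c)"
  by (rule cblI[of _ "\<bar>c\<bar>" 0]) auto

lemma cbl_add: assumes "cbl n \<phi>" "cbl n \<psi>" shows "cbl n (\<lambda>v. \<phi> v + \<psi> v)"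
proof -
  obtain B L where B: "\<And>x. \<bar>\<phi> x\<bar> \<le> B" "L \<ge> 0" "\<And>x y. \<bar>\<phi> x - \<phi> y\<bar> \<le> L * nrm n x y"
    using cblE[OF assms(1)] by metis
  obtain B' L' where B': "\<And>x. \<bar>\<psi> x\<bar> \<le> B'" "L' \<ge> 0" "\<And>x y. \<bar>\<psi> x - \<psi> y\<bar> \<le> L' * nrm n x y"
    using cblE[OF assms(2)] by metis
  show ?thesis
  proof (rule cblI[of _ "B + B'" "L + L'"])
    fix x y
    show "\<bar>\<phi> x + \<psi> x - (\<phi> y + \<psi> y)\<bar> \<le> (L + L') * nrm n x y"
    proof -
      have "\<bar>\<phi> x + \<psi> x - (\<phi> y + \<psi> y)\<bar> = \<bar>(\<phi> x - \<phi> y) + (\<psi> x - \<psi> y)\<bar>" by simp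
      also have "\<dots> \<le> \<bar>\<phi> x - \<phi> y\<bar> + \<bar>\<psi> x - \<psi> y\<bar>" by (rule abs_triangle_ineq)
      also have "\<dots> \<le> L * nrm n x y + L' * nrm n x y" by (rule add_mono[OF B(3) B'(3)])
      finally show ?thesis by (simp add: distrib_right)
    qed
  next
    fix x show "\<bar>\<phi> x + \<psi> x\<bar> \<le> B + B'" using B(1)[of x] B'(1)[of x] by linarith
  qed (use B B' in simp)
qed

lemma cbl_neg: assumes "cbl n \<phi>" shows "cbl n (\<lambda>v. - \<phi> v)"
proof -
  obtain B L where B: "\<And>x. \<bar>\<phi> x\<bar> \<le> B" "L \<ge> 0" "\<And>x y. \<bar>\<phi> x - \<phi> y\<bar> \<le> L * nrm n x y"
    using cblE[OF assms(1)] by metis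
  show ?thesis
  proof (rule cblI[of _ B L])
    fix x y
    have "\<bar>- \<phi> x - - \<phi> y\<bar> = \<bar>\<phi> x - \<phi> y\<bar>" by linarith
    then show "\<bar>- \<phi> x - - \<phi> y\<bar> \<le> L * nrm n x y" using B(3) by simp
  qed (use B in simp_all)
qed

lemma cbl_diff: assumes "cbl n \<phi>" "cbl n \<psi>" shows "cbl n (\<lambda>v. \<phi> v - \<psi> v)"
  using cbl_add[OF assms(1) cbl_neg[OF assms(2)]] by simp

lemma cbl_mult: assumes "cbl n \<phi>" "cbl n \<psi>" shows "cbl n (\<lambda>v. \<phi> v * \<psi> v)"
proof -
  obtain B L where B: "B \<ge> 0" "\<And>x. \<bar>\<phi> x\<bar> \<le> B" "L \<ge> 0" "\<And>x y. \<bar>\<phi> x - \<phi> y\<bar> \<le> L * nrm n x y"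
    using cblE[OF assms(1)] by metis
  obtain B' L' where B': "B' \<ge> 0" "\<And>x. \<bar>\<psi> x\<bar> \<le> B'" "L' \<ge> 0" "\<And>x y. \<bar>\<psi> x - \<psi> y\<bar> \<le> L' * nrm n x y"
    using cblE[OF assms(2)] by metis
  show ?thesis
  proof (rule cblI[of _ "B * B'" "B * L' + B' * L"])
    fix x show "\<bar>\<phi> x * \<psi> x\<bar> \<le> B * B'" using B B' by (simp add: abs_mult mult_mono)
  next
    fix x y
    have "\<phi> x * \<psi> x - \<phi> y * \<psi> y = \<phi> x * (\<psi> x - \<psi> y) + \<psi> y * (\<phi> x - \<phi> y)" by algebra
    hence "\<bar>\<phi> x * \<psi> x - \<phi> y * \<psi> y\<bar> \<le> \<bar>\<phi> x\<bar> * \<bar>\<psi> x - \<psi> y\<bar> + \<bar>\<psi> y\<bar> * \<bar>\<phi> x - \<phi> y\<bar>"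
      by (metis abs_mult abs_triangle_ineq)
    also have "\<dots> \<le> B * (L' * nrm n x y) + B' * (L * nrm n x y)"
      using B B' by (intro add_mono mult_mono) auto
    finally show "\<bar>\<phi> x * \<psi> x - \<phi> y * \<psi> y\<bar> \<le> (B * L' + B' * L) * nrm n x y" by (simp add: algebra_simps)
  qed (use B B' in auto)
qed

lemma cbl1E: assumes "cbl1 f"
  obtains B L where "B \<ge> 0" "L > 0" "\<And>x. \<bar>f x\<bar> \<le> B" "\<And>x y. \<bar>f x - f y\<bar> \<le> L * \<bar>x - y\<bar>"
proof -
  from assms obtain L where L: "L-lipschitz_on UNIV f" and bd: "bounded (range f)" unfolding cbl1_def by blast
  from bd obtain B where B: "\<And>x. \<bar>f x\<bar> \<le> B" unfolding bounded_iff by auto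
  have "B \<ge> 0" using B[of 0] by linarith
  have L0: "L \<ge> 0" using L lipschitz_on_nonneg by blast
  have lip2: "\<bar>f x - f y\<bar> \<le> (L + 1) * \<bar>x - y\<bar>" for x y
  proof -
    have "\<bar>f x - f y\<bar> \<le> L * \<bar>x - y\<bar>" using lipschitz_onD[OF L, of x y] by (simp add: dist_real_def)
    also have "\<dots> \<le> (L+1) * \<bar>x - y\<bar>" by (intro mult_right_mono) auto
    finally show ?thesis .
  qed
  show ?thesis using that[of B "L+1", OF \<open>B \<ge> 0\<close> _ B lip2] L0 by simp
qed



definition Qop :: "(('w \<Rightarrow> real) \<Rightarrow> real) \<Rightarrow> (nat \<Rightarrow> 'w \<Rightarrow> real) \<Rightarrow> nat \<Rightarrow> ((nat \<Rightarrow> real) \<Rightarrow> real) \<Rightarrow> (nat \<Rightarrow> real) \<Rightarrow> real" where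
  "Qop E X n \<phi> = (\<lambda>v. E (\<lambda>w'. \<phi> (\<lambda>i. if i < n then v i else X (Suc n) w')))"

primrec pchain :: "(('w \<Rightarrow> real) \<Rightarrow> real) \<Rightarrow> (nat \<Rightarrow> 'w \<Rightarrow> real) \<Rightarrow> nat \<Rightarrow> nat \<Rightarrow> ((nat \<Rightarrow> real) \<Rightarrow> real) \<Rightarrow> (nat \<Rightarrow> real) \<Rightarrow> real" where
  "pchain E X m 0 \<phi> = \<phi>"
| "pchain E X m (Suc d) \<phi> = Qop E X m (pchain E X (Suc m) d \<phi>)"

definition highdep :: "nat \<Rightarrow> ((nat \<Rightarrow> real) \<Rightarrow> real) \<Rightarrow> bool" where
  "highdep m \<phi> \<longleftrightarrow> (\<forall>v v'. (\<forall>i\<ge>m. v i = v' i) \<longrightarrow> \<phi> v = \<phi> v')"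

definition lowdep :: "nat \<Rightarrow> ((nat \<Rightarrow> real) \<Rightarrow> real) \<Rightarrow> bool" where
  "lowdep m \<phi> \<longleftrightarrow> (\<forall>v v'. (\<forall>i<m. v i = v' i) \<longrightarrow> \<phi> v = \<phi> v')"

lemma Qop_highdep: "highdep j \<phi> \<Longrightarrow> j \<le> m \<Longrightarrow> highdep j (Qop E X m \<phi>)"
  unfolding highdep_def Qop_def
proof (intro allI impI)
  fix v v' :: "nat \<Rightarrow> real"
  assume h: "\<forall>v v'. (\<forall>i\<ge>j. v i = v' i) \<longrightarrow> \<phi> v = \<phi> v'" and jm: "j \<le> m" and a: "\<forall>i\<ge>j. v i = v' i"
  have "(\<lambda>w'. \<phi> (\<lambda>i. if i < m then v i else X (Suc m) w')) = (\<lambda>w'. \<phi> (\<lambda>i. if i < m then v' i else X (Suc m) w'))"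
    by (rule ext, rule h[rule_format]) (use a jm in auto)
  then show "E (\<lambda>w'. \<phi> (\<lambda>i. if i < m then v i else X (Suc m) w')) = E (\<lambda>w'. \<phi> (\<lambda>i. if i < m then v' i else X (Suc m) w'))"
    by simp
qed

lemma chain_highdep: "highdep j \<phi> \<Longrightarrow> j \<le> m \<Longrightarrow> highdep j (pchain E X m d \<phi>)"
proof (induction d arbitrary: m)
  case 0 then show ?case by simp
next
  case (Suc d)
  have "highdep j (pchain E X (Suc m) d \<phi>)" using Suc.IH Suc.prems by simp
  then show ?case using Qop_highdep Suc.prems by simp
qed

lemma const_of_cbl_highdep: assumes "cbl m \<phi>" "highdep m \<phi>" shows "\<phi> v = \<phi> v'"
proof -
  let ?u = "\<lambda>i. if i < m then v i else v' i"
  have "\<phi> v = \<phi> ?u" by (rule cbl_lowdep[OF assms(1)]) auto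
  also have "\<dots> = \<phi> v'" using assms(2) unfolding highdep_def by auto
  finally show ?thesis .
qed

locale sleX = sle M H E for M :: "'w measure" and H E +
  fixes X :: "nat \<Rightarrow> 'w \<Rightarrow> real"
  assumes XH: "\<And>i. i \<ge> 1 \<Longrightarrow> X i \<in> H"
    and indep: "indep_seq E X"
begin

definition Xv :: "'w \<Rightarrow> nat \<Rightarrow> real" where "Xv w = (\<lambda>i. X (Suc i) w)"

lemma H_Xv: "cbl n \<phi> \<Longrightarrow> (\<lambda>w. \<phi> (Xv w)) \<in> H"
  unfolding Xv_def by (rule H_cbl[of n "\<lambda>i. X (Suc i)"]) (auto intro: XH)

lemma inner_H: assumes "cbl (Suc n) \<phi>"
  shows "(\<lambda>w'. \<phi> (\<lambda>i. if i < n then v i else X (Suc n) w')) \<in> H"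
proof -
  define \<psi> where "\<psi> y = \<phi> (\<lambda>i. if i < n then v i else y n)" for y :: "nat \<Rightarrow> real"
  obtain B L where B: "\<And>x. \<bar>\<phi> x\<bar> \<le> B" "L \<ge> 0" "\<And>x y. \<bar>\<phi> x - \<phi> y\<bar> \<le> L * nrm (Suc n) x y"
    using cblE[OF assms] by metis
  have "cbl (Suc n) \<psi>"
  proof (rule cblI[of _ B L])
    fix x y :: "nat \<Rightarrow> real"
    have "nrm (Suc n) (\<lambda>i. if i < n then v i else x n) (\<lambda>i. if i < n then v i else y n) = \<bar>x n - y n\<bar>"
      unfolding nrm_def by simp
    also have "\<dots> \<le> nrm (Suc n) x y" by (rule coord_le_nrm) simp
    finally show "\<bar>\<psi> x - \<psi> y\<bar> \<le> L * nrm (Suc n) x y" unfolding \<psi>_def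
      using B(3) mult_left_mono[OF _ B(2)] order.trans by blast
  qed (use B in \<open>auto simp: \<psi>_def\<close>)
  from H_Xv[OF this] show ?thesis unfolding \<psi>_def Xv_def by simp
qed

lemma Qop_cbl: assumes "cbl (Suc n) \<phi>" shows "cbl n (Qop E X n \<phi>)"
proof -
  obtain B L where B: "\<And>x. \<bar>\<phi> x\<bar> \<le> B" "L \<ge> 0" "\<And>x y. \<bar>\<phi> x - \<phi> y\<bar> \<le> L * nrm (Suc n) x y"
    using cblE[OF assms] by metis
  show ?thesis
  proof (rule cblI[of _ B L])
    fix v show "\<bar>Qop E X n \<phi> v\<bar> \<le> B" unfolding Qop_def
      by (rule E_bound[OF inner_H[OF assms]]) (use B in auto)
  next
    fix v v' :: "nat \<Rightarrow> real"
    show "\<bar>Qop E X n \<phi> v - Qop E X n \<phi> v'\<bar> \<le> L * nrm n v v'" unfolding Qop_def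
    proof (rule E_lip[OF inner_H[OF assms] inner_H[OF assms]])
      fix w
      have "nrm (Suc n) (\<lambda>i. if i < n then v i else X (Suc n) w) (\<lambda>i. if i < n then v' i else X (Suc n) w) = nrm n v v'"
        unfolding nrm_def by simp
      then show "\<bar>\<phi> (\<lambda>i. if i < n then v i else X (Suc n) w) - \<phi> (\<lambda>i. if i < n then v' i else X (Suc n) w)\<bar> \<le> L * nrm n v v'"
        using B(3) by metis
    qed
  qed (use B in auto)
qed

lemma Qop_indep: assumes "n \<ge> 1" "cbl (Suc n) \<phi>"
  shows "E (\<lambda>w. \<phi> (Xv w)) = E (\<lambda>w. Qop E X n \<phi> (Xv w))"
  using indep assms unfolding indep_seq_def Qop_def Xv_def by simp

lemma chain_cbl: "cbl (m + d) \<phi> \<Longrightarrow> cbl m (pchain E X m d \<phi>)"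
proof (induction d arbitrary: m)
  case 0 then show ?case by simp
next
  case (Suc d)
  have "cbl (Suc m) (pchain E X (Suc m) d \<phi>)" using Suc by simp
  then show ?case by (simp add: Qop_cbl)
qed

lemma chain_E: "1 \<le> m \<Longrightarrow> cbl (m + d) \<phi> \<Longrightarrow> E (\<lambda>w. \<phi> (Xv w)) = E (\<lambda>w. pchain E X m d \<phi> (Xv w))"
proof (induction d arbitrary: m)
  case 0 then show ?case by simp
next
  case (Suc d)
  have c: "cbl (Suc m + d) \<phi>" using Suc by simp
  have "E (\<lambda>w. \<phi> (Xv w)) = E (\<lambda>w. pchain E X (Suc m) d \<phi> (Xv w))" using Suc.IH[OF _ c] by simp
  also have "\<dots> = E (\<lambda>w. Qop E X m (pchain E X (Suc m) d \<phi>) (Xv w))"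
    by (rule Qop_indep) (use Suc chain_cbl[OF c] in auto)
  finally show ?case by simp
qed

lemma chain_prod:
  assumes "lowdep j g" "j \<le> m" "cbl (m + d) h"
  shows "pchain E X m d (\<lambda>v. g v * h v) =
     (\<lambda>v. max (g v) 0 * pchain E X m d h v + max (- g v) 0 * pchain E X m d (\<lambda>v. - h v) v)"
  using assms(2,3)
proof (induction d arbitrary: m)
  case 0
  show ?case by (rule ext) (simp add: max_def)
next
  case (Suc d)
  have c: "cbl (Suc m + d) h" using Suc by simp
  have c1: "cbl (Suc m) (pchain E X (Suc m) d h)" by (rule chain_cbl[OF c])
  have c2: "cbl (Suc m) (pchain E X (Suc m) d (\<lambda>v. - h v))" by (rule chain_cbl[OF cbl_neg[OF c]])
  have IH: "pchain E X (Suc m) d (\<lambda>v. g v * h v) =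
     (\<lambda>v. max (g v) 0 * pchain E X (Suc m) d h v + max (- g v) 0 * pchain E X (Suc m) d (\<lambda>v. - h v) v)"
    using Suc.IH[OF _ c] Suc.prems by simp
  show ?case
  proof (rule ext)
    fix v
    let ?z = "\<lambda>w'. (\<lambda>i. if i < m then v i else X (Suc m) w')"
    have gz: "g (?z w') = g v" for w'
      using assms(1) Suc.prems unfolding lowdep_def by auto
    have "pchain E X m (Suc d) (\<lambda>v. g v * h v) v =
       E (\<lambda>w'. max (g v) 0 * pchain E X (Suc m) d h (?z w') + max (- g v) 0 * pchain E X (Suc m) d (\<lambda>v. - h v) (?z w'))"
      by (simp add: Qop_def IH gz)
    also have "\<dots> = max (g v) 0 * pchain E X m (Suc d) h v + max (- g v) 0 * pchain E X m (Suc d) (\<lambda>v. - h v) v"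
    proof (cases "g v \<ge> 0")
      case True
      then have "E (\<lambda>w'. max (g v) 0 * pchain E X (Suc m) d h (?z w') + max (- g v) 0 * pchain E X (Suc m) d (\<lambda>v. - h v) (?z w'))
          = E (\<lambda>w'. g v * pchain E X (Suc m) d h (?z w'))" by (simp add: max_def)
      also have "\<dots> = g v * E (\<lambda>w'. pchain E X (Suc m) d h (?z w'))"
        by (rule E_poshom[OF inner_H[OF c1] True])
      finally show ?thesis using True by (simp add: Qop_def max_def)
    next
      case False
      then have "E (\<lambda>w'. max (g v) 0 * pchain E X (Suc m) d h (?z w') + max (- g v) 0 * pchain E X (Suc m) d (\<lambda>v. - h v) (?z w'))
          = E (\<lambda>w'. (- g v) * pchain E X (Suc m) d (\<lambda>v. - h v) (?z w'))" by (simp add: max_def)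
      also have "\<dots> = (- g v) * E (\<lambda>w'. pchain E X (Suc m) d (\<lambda>v. - h v) (?z w'))"
        by (rule E_poshom[OF inner_H[OF c2]]) (use False in simp)
      finally show ?thesis using False by (simp add: Qop_def max_def)
    qed
    finally show "pchain E X m (Suc d) (\<lambda>v. g v * h v) v =
       max (g v) 0 * pchain E X m (Suc d) h v + max (- g v) 0 * pchain E X m (Suc d) (\<lambda>v. - h v) v" .
  qed
qed

end


context sleX begin

lemma main_bound:
  fixes f :: "real \<Rightarrow> real" and Bf Lf bj bk a b \<epsilon> :: real and j k :: nat
  assumes fB: "\<And>x. \<bar>f x\<bar> \<le> Bf" and Bf: "Bf \<ge> 0" and Lf: "Lf > 0"
    and fL: "\<And>x y. \<bar>f x - f y\<bar> \<le> Lf * \<bar>x - y\<bar>"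
    and jk: "1 \<le> j" "j \<le> k" and bj: "bj > 0" and bk: "bk > 0"
    and a: "a = E (\<lambda>w. f ((\<Sum>i<j. Xv w i) / bj))"
    and b: "b = E (\<lambda>w. f ((\<Sum>i<k. Xv w i) / bk))"
    and eps: "E (\<lambda>w. - f ((\<Sum>i<k. Xv w i) / bk)) + b \<le> \<epsilon>" "\<epsilon> \<ge> 0"
  shows "E (\<lambda>w. (f ((\<Sum>i<j. Xv w i) / bj) - a) * (f ((\<Sum>i<k. Xv w i) / bk) - b))
     \<le> 2 * Bf * (E (\<lambda>w. min (Lf * \<bar>(\<Sum>i<j. Xv w i)\<bar> / bk) (2 * Bf)) + \<epsilon>)
       + 2 * Bf * E (\<lambda>w. min (Lf * \<bar>(\<Sum>i<j. Xv w i)\<bar> / bk) (2 * Bf))"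
proof -
  have fL': "\<And>x y. \<bar>f x - f y\<bar> \<le> Lf * \<bar>x - y\<bar>" by (rule fL)
  have cblf: "cbl k (\<lambda>v. f (c * (\<Sum>i\<in>A. v i)))" if "A \<subseteq> {..<k}" for A c
    by (rule cbl_comp_lin[OF that fB _ fL]) (use Lf in simp)
  define Gv where "Gv v = f (1/bj * (\<Sum>i\<in>{..<j}. v i)) - a" for v :: "nat \<Rightarrow> real"
  define Fk where "Fk v = f (1/bk * (\<Sum>i\<in>{..<k}. v i))" for v :: "nat \<Rightarrow> real"
  define T where "T v = f (1/bk * (\<Sum>i\<in>{j..<k}. v i))" for v :: "nat \<Rightarrow> real"
  define hv where "hv v = T v - b" for v :: "nat \<Rightarrow> real"
  define D where "D v = (\<lambda>t. min (Lf * \<bar>t\<bar>) (2 * Bf)) (1/bk * (\<Sum>i\<in>{..<j}. v i))" for v :: "nat \<Rightarrow> real"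
  have cG: "cbl k Gv" unfolding Gv_def by (rule cbl_diff[OF cblf cbl_const]) (use jk in auto)
  have cF: "cbl k Fk" unfolding Fk_def by (rule cblf) auto
  have cT: "cbl k T" unfolding T_def by (rule cblf) auto
  have ch: "cbl k hv" unfolding hv_def by (rule cbl_diff[OF cT cbl_const])
  have cD: "cbl k D" unfolding D_def
  proof (rule cbl_comp_lin[of _ _ _ "2*Bf" Lf])
    fix s t :: real
    show "\<bar>min (Lf * \<bar>s\<bar>) (2 * Bf) - min (Lf * \<bar>t\<bar>) (2 * Bf)\<bar> \<le> Lf * \<bar>s - t\<bar>"
    proof -
      have "\<bar>Lf * \<bar>s\<bar> - Lf * \<bar>t\<bar>\<bar> \<le> Lf * \<bar>s - t\<bar>"
        using Lf by (metis abs_mult abs_of_pos abs_triangle_ineq3 mult_left_mono order_less_imp_le right_diff_distrib)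
      then show ?thesis by linarith
    qed
  qed (use jk Lf Bf in auto)
  have HG: "(\<lambda>w. Gv (Xv w)) \<in> H" by (rule H_Xv[OF cG])
  have HF: "(\<lambda>w. Fk (Xv w)) \<in> H" by (rule H_Xv[OF cF])
  have HT: "(\<lambda>w. T (Xv w)) \<in> H" by (rule H_Xv[OF cT])
  have HD: "(\<lambda>w. D (Xv w)) \<in> H" by (rule H_Xv[OF cD])
  have Dnn: "D v \<ge> 0" for v unfolding D_def using Lf Bf by auto
  have aB: "\<bar>a\<bar> \<le> Bf" unfolding a
    by (rule E_bound) (use H_Xv[OF cblf[of "{..<j}" "1/bj"]] jk fB in auto)
  have bB: "\<bar>b\<bar> \<le> Bf" unfolding b
    by (rule E_bound) (use H_Xv[OF cblf[of "{..<k}" "1/bk"]] fB in auto)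
  have b': "b = E (\<lambda>w. Fk (Xv w))" unfolding b Fk_def by simp
  have GB: "\<bar>Gv v\<bar> \<le> 2 * Bf" for v unfolding Gv_def using fB[of "1/bj * (\<Sum>i\<in>{..<j}. v i)"] aB by linarith
  have FTD: "\<bar>Fk v - T v\<bar> \<le> D v" for v
  proof -
    have split: "(\<Sum>i\<in>{..<k}. v i) = (\<Sum>i\<in>{..<j}. v i) + (\<Sum>i\<in>{j..<k}. v i)"
      using jk by (metis atLeast0LessThan sum.atLeastLessThan_concat zero_le)
    have "\<bar>Fk v - T v\<bar> \<le> Lf * \<bar>1/bk * (\<Sum>i\<in>{..<k}. v i) - 1/bk * (\<Sum>i\<in>{j..<k}. v i)\<bar>"
      unfolding Fk_def T_def by (rule fL)
    also have "\<dots> = Lf * \<bar>1/bk * (\<Sum>i\<in>{..<j}. v i)\<bar>" by (simp add: split algebra_simps)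
    finally have 1: "\<bar>Fk v - T v\<bar> \<le> Lf * \<bar>1/bk * (\<Sum>i\<in>{..<j}. v i)\<bar>" .
    have 2: "\<bar>Fk v - T v\<bar> \<le> 2 * Bf" unfolding Fk_def T_def
      using fB[of "1/bk * (\<Sum>i\<in>{..<k}. v i)"] fB[of "1/bk * (\<Sum>i\<in>{j..<k}. v i)"] by linarith
    from 1 2 show ?thesis unfolding D_def by simp
  qed
  define \<delta> where "\<delta> = E (\<lambda>w. D (Xv w))"
  have \<delta>nn: "\<delta> \<ge> 0" unfolding \<delta>_def using E_mono[OF H_const HD, of 0] Dnn E_const by simp
  have lowG: "lowdep j Gv" unfolding lowdep_def Gv_def by auto
  have highh: "highdep j hv" unfolding highdep_def hv_def T_def by auto
  have highh': "highdep j (\<lambda>v. - hv v)" unfolding highdep_def hv_def T_def by auto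
  have jk': "j + (k - j) = k" using jk by simp
  have ch': "cbl (j + (k - j)) hv" using ch jk' by simp
  have cGh: "cbl (j + (k - j)) (\<lambda>v. Gv v * hv v)" using cbl_mult[OF cG ch] jk' by simp
  define C1 where "C1 = pchain E X j (k - j) hv"
  define C2 where "C2 = pchain E X j (k - j) (\<lambda>v. - hv v)"
  have C1c: "C1 v = C1 (\<lambda>_. 0)" for v unfolding C1_def
    by (rule const_of_cbl_highdep[OF chain_cbl[OF ch'] chain_highdep[OF highh]]) simp
  have C2c: "C2 v = C2 (\<lambda>_. 0)" for v unfolding C2_def
    by (rule const_of_cbl_highdep[OF chain_cbl chain_highdep[OF highh']]) (use cbl_neg[OF ch'] in auto)
  define c1 where "c1 = C1 (\<lambda>_. 0)"
  define c2 where "c2 = C2 (\<lambda>_. 0)"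
  have "E (\<lambda>w. hv (Xv w)) = E (\<lambda>w. C1 (Xv w))" unfolding C1_def
    by (rule chain_E[OF jk(1) ch'])
  moreover have "(\<lambda>w. C1 (Xv w)) = (\<lambda>w. c1)" unfolding c1_def by (rule ext) (rule C1c)
  ultimately have c1E: "c1 = E (\<lambda>w. hv (Xv w))" using E_const by simp
  have "E (\<lambda>w. - hv (Xv w)) = E (\<lambda>w. C2 (Xv w))" unfolding C2_def
    by (rule chain_E[OF jk(1) cbl_neg[OF ch']])
  moreover have "(\<lambda>w. C2 (Xv w)) = (\<lambda>w. c2)" unfolding c2_def by (rule ext) (rule C2c)
  ultimately have c2E: "c2 = E (\<lambda>w. - hv (Xv w))" using E_const by simp
  have c1b: "c1 \<le> \<delta>"
  proof -
    have "c1 = E (\<lambda>w. T (Xv w)) - b" unfolding c1E hv_def using E_add_const[OF HT, of "-b"] by simp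
    also have "\<dots> \<le> E (\<lambda>w. T (Xv w) - Fk (Xv w))" unfolding b' by (rule E_diff[OF HT HF])
    also have "\<dots> \<le> \<delta>" unfolding \<delta>_def
      by (rule E_mono[OF H_diff[OF HT HF] HD]) (use FTD in \<open>auto simp: abs_le_iff\<close>)
    finally show ?thesis .
  qed
  have c2b: "c2 \<le> \<delta> + \<epsilon>"
  proof -
    have HnT: "(\<lambda>w. - T (Xv w)) \<in> H" by (rule H_neg[OF HT])
    have HnF: "(\<lambda>w. - Fk (Xv w)) \<in> H" by (rule H_neg[OF HF])
    have e1: "c2 = E (\<lambda>w. - T (Xv w)) + b" unfolding c2E hv_def using E_add_const[OF HnT, of b] by simp
    have e2: "E (\<lambda>w. - T (Xv w)) - E (\<lambda>w. - Fk (Xv w)) \<le> E (\<lambda>w. - T (Xv w) - - Fk (Xv w))"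
      by (rule E_diff[OF HnT HnF])
    have e3: "E (\<lambda>w. - T (Xv w) - - Fk (Xv w)) \<le> \<delta>" unfolding \<delta>_def
      by (rule E_mono[OF H_diff[OF HnT HnF] HD]) (use FTD in \<open>auto simp: abs_le_iff\<close>)
    from e1 e2 e3 have "c2 \<le> \<delta> + (E (\<lambda>w. - Fk (Xv w)) + b)" by linarith
    also have "E (\<lambda>w. - Fk (Xv w)) + b \<le> \<epsilon>" using eps(1) unfolding Fk_def by simp
    finally show ?thesis by simp
  qed
  have P1: "E (\<lambda>w. Gv (Xv w) * hv (Xv w)) \<le> 2 * Bf * (\<delta> + \<epsilon>)"
  proof -
    have "E (\<lambda>w. Gv (Xv w) * hv (Xv w)) = E (\<lambda>w. pchain E X j (k - j) (\<lambda>v. Gv v * hv v) (Xv w))"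
      by (rule chain_E[OF jk(1) cGh])
    also have "\<dots> \<le> E (\<lambda>_. 2 * Bf * (\<delta> + \<epsilon>))"
    proof (rule E_mono[OF H_Xv[OF chain_cbl[OF cGh]] H_const])
      fix w
      have eq: "pchain E X j (k - j) (\<lambda>v. Gv v * hv v) (Xv w) = max (Gv (Xv w)) 0 * c1 + max (- Gv (Xv w)) 0 * c2"
        using chain_prod[OF lowG order.refl ch'] C1c[of "Xv w"] C2c[of "Xv w"] unfolding C1_def C2_def c1_def c2_def by simp
      have "max (Gv (Xv w)) 0 * c1 + max (- Gv (Xv w)) 0 * c2 \<le> \<bar>Gv (Xv w)\<bar> * (\<delta> + \<epsilon>)"
      proof (cases "Gv (Xv w) \<ge> 0")
        case True then show ?thesis using c1b eps(2) by (simp add: max_def mult_left_mono)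
      next
        case False then show ?thesis using c2b by (simp add: max_def mult_left_mono)
      qed
      also have "\<dots> \<le> 2 * Bf * (\<delta> + \<epsilon>)" using GB \<delta>nn eps(2) by (intro mult_right_mono) auto
      finally show "pchain E X j (k - j) (\<lambda>v. Gv v * hv v) (Xv w) \<le> 2 * Bf * (\<delta> + \<epsilon>)" using eq by simp
    qed
    finally show ?thesis using E_const by simp
  qed
  have P2: "E (\<lambda>w. Gv (Xv w) * (Fk (Xv w) - T (Xv w))) \<le> 2 * Bf * \<delta>"
  proof -
    have "E (\<lambda>w. Gv (Xv w) * (Fk (Xv w) - T (Xv w))) \<le> E (\<lambda>w. 2 * Bf * D (Xv w))"
    proof (rule E_mono[OF H_Xv[OF cbl_mult[OF cG cbl_diff[OF cF cT]]] H_scale[OF HD]])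
      fix w
      have "Gv (Xv w) * (Fk (Xv w) - T (Xv w)) \<le> \<bar>Gv (Xv w)\<bar> * \<bar>Fk (Xv w) - T (Xv w)\<bar>"
        by (metis abs_ge_self abs_mult)
      also have "\<dots> \<le> 2 * Bf * D (Xv w)" using GB FTD Bf by (intro mult_mono) auto
      finally show "Gv (Xv w) * (Fk (Xv w) - T (Xv w)) \<le> 2 * Bf * D (Xv w)" .
    qed
    also have "\<dots> = 2 * Bf * \<delta>" unfolding \<delta>_def using E_poshom[OF HD, of "2*Bf"] Bf by simp
    finally show ?thesis .
  qed
  have "E (\<lambda>w. (f ((\<Sum>i<j. Xv w i) / bj) - a) * (f ((\<Sum>i<k. Xv w i) / bk) - b))
      = E (\<lambda>w. Gv (Xv w) * hv (Xv w) + Gv (Xv w) * (Fk (Xv w) - T (Xv w)))"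
    unfolding Gv_def hv_def Fk_def by (simp add: algebra_simps)
  also have "\<dots> \<le> E (\<lambda>w. Gv (Xv w) * hv (Xv w)) + E (\<lambda>w. Gv (Xv w) * (Fk (Xv w) - T (Xv w)))"
    by (rule E_subadd[OF H_Xv[OF cbl_mult[OF cG ch]] H_Xv[OF cbl_mult[OF cG cbl_diff[OF cF cT]]]])
  also have "\<dots> \<le> 2 * Bf * (\<delta> + \<epsilon>) + 2 * Bf * \<delta>" using P1 P2 by simp
  also have "\<delta> = E (\<lambda>w. min (Lf * \<bar>(\<Sum>i<j. Xv w i)\<bar> / bk) (2 * Bf))"
    unfolding \<delta>_def D_def using bk by (simp add: abs_mult abs_of_pos)
  finally show ?thesis .
qed

end


lemma (in sle) H_comp1:
  assumes "Y \<in> H" "\<And>t. \<bar>g t\<bar> \<le> B" "L \<ge> 0" "\<And>s t. \<bar>g s - g t\<bar> \<le> L * \<bar>s - t\<bar>"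
  shows "(\<lambda>w. g (Y w)) \<in> H"
proof -
  have "cbl 1 (\<lambda>v. g (1 * (\<Sum>i\<in>{..<1}. v i)))" by (rule cbl_comp_lin[OF _ assms(2-4)]) auto
  from H_cbl[of 1 "\<lambda>_. Y", OF _ this] assms(1) show ?thesis by simp
qed

lemma (in sleX) H_compW:
  assumes "\<And>t. \<bar>g t\<bar> \<le> B" "L \<ge> 0" "\<And>s t. \<bar>g s - g t\<bar> \<le> L * \<bar>s - t\<bar>"
  shows "(\<lambda>w. g (c * (\<Sum>i<n. Xv w i))) \<in> H"
proof -
  have "cbl n (\<lambda>v. g (c * (\<Sum>i\<in>{..<n}. v i)))" by (rule cbl_comp_lin[OF _ assms]) auto
  from H_Xv[OF this] show ?thesis by simp
qed

lemma cbl1_lip1: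
  assumes "\<And>t. \<bar>g t\<bar> \<le> B" "\<And>s t. \<bar>g s - g t\<bar> \<le> \<bar>s - t\<bar>"
  shows "cbl1 g \<and> 1-lipschitz_on UNIV g"
proof -
  have l: "1-lipschitz_on UNIV g" by (rule lipschitz_onI) (use assms(2) in \<open>auto simp: dist_real_def\<close>)
  have "bounded (range g)" unfolding bounded_iff using assms(1) by auto
  with l show ?thesis unfolding cbl1_def by blast
qed



theorem lemma4p2:
  fixes M :: "'w measure" and H :: "('w \<Rightarrow> real) set" and E :: "('w \<Rightarrow> real) \<Rightarrow> real"
    and M' :: "'v measure" and H' :: "('v \<Rightarrow> real) set" and E' :: "('v \<Rightarrow> real) \<Rightarrow> real"
    and X :: "nat \<Rightarrow> 'w \<Rightarrow> real" and \<xi> :: "'v \<Rightarrow> real"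
    and \<beta> \<alpha> :: real and f :: "real \<Rightarrow> real"
  assumes space1: "sublinear_expectation_space M H E" and condA1: "condition_A H E"
    and space2: "sublinear_expectation_space M' H' E'" and condA2: "condition_A H' E'"
    and beta: "\<beta> \<ge> 1"
    and XH: "\<And>i. i \<ge> 1 \<Longrightarrow> X i \<in> H"
    and X2H: "\<And>i. i \<ge> 1 \<Longrightarrow> (\<lambda>w. (X i w)\<^sup>2) \<in> H"
    and indep: "indep_seq E X"
    and mean0: "\<And>i. i \<ge> 1 \<Longrightarrow> E (X i) = 0 \<and> E (\<lambda>w. - X i w) = 0"
    and ratio: "\<And>i. i \<ge> 1 \<Longrightarrow> sig_up E X i / sig_lo E X i = \<beta>"
    and var_lo: "\<exists>c>0. \<forall>i\<ge>1. c \<le> (sig_lo E X i)\<^sup>2"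
    and var_up: "\<exists>C. \<forall>i\<ge>1. (sig_up E X i)\<^sup>2 \<le> C"
    and xiH: "\<xi> \<in> H'" and xi2H: "(\<lambda>w. (\<xi> w)\<^sup>2) \<in> H'"
    and Gnormal: "G_normal E' \<xi>"
    and xi_up: "sqrt (E' (\<lambda>w. (\<xi> w)\<^sup>2)) = 2 * \<beta> / (1 + \<beta>)"
    and xi_lo: "sqrt (- E' (\<lambda>w. - (\<xi> w)\<^sup>2)) = 2 / (1 + \<beta>)"
    and alpha: "0 < \<alpha>" "\<alpha> < 1"
    and song: "\<exists>C>0. \<forall>n\<ge>1. \<forall>g. cbl1 g \<and> 1-lipschitz_on UNIV g \<longrightarrow>
        \<bar>E (\<lambda>w. g (Wn E X n w)) - E' (\<lambda>w. g (\<xi> w))\<bar>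
          \<le> C * Max ((\<lambda>i. E (\<lambda>w. \<bar>X i w\<bar> powr (2 + \<alpha>)) / (sig E X i) powr (2 + \<alpha>)
                          * (sig E X i / Bn E X n) powr \<alpha>) ` {1..n})"
    and XaH: "\<And>i. i \<ge> 1 \<Longrightarrow> (\<lambda>w. \<bar>X i w\<bar> powr (2 + \<alpha>)) \<in> H"
    and moment: "\<exists>K. \<forall>i\<ge>1. E (\<lambda>w. \<bar>X i w\<bar> powr (2 + \<alpha>)) \<le> K"
    and fH: "cbl1 f" and fsym: "E' (\<lambda>w. f (\<xi> w)) = - E' (\<lambda>w. - f (\<xi> w))"
  shows "\<exists>M3>0. \<exists>M4>0. \<forall>j k. 1 \<le> j \<and> j \<le> k \<longrightarrow>
           E (\<lambda>w. (f (Wn E X j w) - E (\<lambda>w'. f (Wn E X j w')))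
                 * (f (Wn E X k w) - E (\<lambda>w'. f (Wn E X k w'))))
             \<le> M3 * sqrt (real j / real k) + M4 * (1 / real k) powr (\<alpha> / 2)"
proof -
  interpret S1: sleX M H E X
    by (unfold_locales) (use space1 XH indep in auto)
  interpret S2: sle M' H' E' by (unfold_locales) (rule space2)
  obtain Bf Lf where Bf: "Bf \<ge> 0" and Lf: "Lf > 0" and fB: "\<And>x. \<bar>f x\<bar> \<le> Bf"
    and fL: "\<And>x y. \<bar>f x - f y\<bar> \<le> Lf * \<bar>x - y\<bar>" using cbl1E[OF fH] by metis
  obtain c0 where c0: "c0 > 0" "\<And>i. i \<ge> 1 \<Longrightarrow> c0 \<le> (sig_lo E X i)\<^sup>2" using var_lo by blast
  obtain Cu where Cu: "\<And>i. i \<ge> 1 \<Longrightarrow> (sig_up E X i)\<^sup>2 \<le> Cu" using var_up by blast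
  obtain K where K: "\<And>i. i \<ge> 1 \<Longrightarrow> E (\<lambda>w. \<bar>X i w\<bar> powr (2 + \<alpha>)) \<le> K" using moment by blast
  obtain Cs where Cs: "Cs > 0" and songC: "\<And>n g. n \<ge> 1 \<Longrightarrow> cbl1 g \<and> 1-lipschitz_on UNIV g \<Longrightarrow>
        \<bar>E (\<lambda>w. g (Wn E X n w)) - E' (\<lambda>w. g (\<xi> w))\<bar>
          \<le> Cs * Max ((\<lambda>i. E (\<lambda>w. \<bar>X i w\<bar> powr (2 + \<alpha>)) / (sig E X i) powr (2 + \<alpha>)
                          * (sig E X i / Bn E X n) powr \<alpha>) ` {1..n})" using song by blast
  define s0 where "s0 = sqrt c0"
  define s1 where "s1 = sqrt Cu"
  have s0: "s0 > 0" unfolding s0_def using c0 by simp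
  have lo: "sig_lo E X i \<ge> s0" if i: "i \<ge> 1" for i
  proof -
    have "E (\<lambda>w. - (X i w)\<^sup>2) \<le> E (\<lambda>_. 0)"
      by (rule S1.E_mono[OF S1.H_neg[OF X2H[OF i]] S1.H_const]) simp
    hence nn: "- E (\<lambda>w. - (X i w)\<^sup>2) \<ge> 0" using S1.E_const by simp
    hence "sig_lo E X i \<ge> 0" unfolding sig_lo_def by simp
    moreover have "s0 \<le> sqrt ((sig_lo E X i)\<^sup>2)" unfolding s0_def using real_sqrt_le_mono[OF c0(2)[OF i]] .
    ultimately show ?thesis by simp
  qed
  have up: "sig_up E X i = \<beta> * sig_lo E X i" if i: "i \<ge> 1" for i
    using ratio[OF i] lo[OF i] s0 by (simp add: field_simps)
  have sig_ge: "sig E X i \<ge> s0" and sig_le: "sig E X i \<le> s1" if i: "i \<ge> 1" for i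
  proof -
    have l0: "sig_lo E X i \<ge> 0" using lo[OF i] s0 by linarith
    have l: "sig_lo E X i \<le> sig_up E X i" unfolding up[OF i]
      using mult_right_mono[OF beta l0] by simp
    show "sig E X i \<ge> s0" unfolding sig_def using l lo[OF i] by simp
    have "sig_up E X i \<ge> 0" using l lo[OF i] s0 by simp
    hence "sig_up E X i \<le> s1" unfolding s1_def using Cu[OF i] real_le_rsqrt by blast
    then show "sig E X i \<le> s1" unfolding sig_def using l by simp
  qed
  have s01: "s0 \<le> s1" using sig_ge[of 1] sig_le[of 1] by simp
  have Bn_ge: "Bn E X n \<ge> sqrt (real n) * s0" and Bn_le: "Bn E X n \<le> sqrt (real n) * s1" for n
  proof -
    have "(\<Sum>i=1..n. (sig E X i)\<^sup>2) \<ge> (\<Sum>i=1..n. s0\<^sup>2)"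
      by (intro sum_mono power_mono) (use sig_ge s0 in auto)
    hence "Bn E X n \<ge> sqrt (real n * s0\<^sup>2)" unfolding Bn_def by simp
    thus "Bn E X n \<ge> sqrt (real n) * s0" using s0 by (simp add: real_sqrt_mult)
    have "(\<Sum>i=1..n. (sig E X i)\<^sup>2) \<le> (\<Sum>i=1..n. s1\<^sup>2)"
      by (intro sum_mono power_mono) (use sig_le sig_ge s0 in \<open>auto intro: order.trans[OF less_imp_le[OF s0]]\<close>)
    hence "Bn E X n \<le> sqrt (real n * s1\<^sup>2)" unfolding Bn_def by simp
    thus "Bn E X n \<le> sqrt (real n) * s1" using s0 s01 by (simp add: real_sqrt_mult)
  qed
  have Bn_pos: "Bn E X n > 0" if "n \<ge> 1" for n
    using Bn_ge[of n] s0 that by (smt (verit) mult_pos_pos of_nat_0_less_iff real_sqrt_gt_0_iff less_le_trans zero_less_one)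
  have sig_Bn: "sig E X i \<le> Bn E X n" if "1 \<le> i" "i \<le> n" for i n
  proof -
    have "(sig E X i)\<^sup>2 \<le> (\<Sum>i=1..n. (sig E X i)\<^sup>2)"
      by (rule member_le_sum) (use that in auto)
    hence "sqrt ((sig E X i)\<^sup>2) \<le> Bn E X n" unfolding Bn_def by (rule real_sqrt_le_mono)
    thus ?thesis using sig_ge[OF that(1)] s0 by simp
  qed
  have Wn_eq: "Wn E X n w = 1 / Bn E X n * (\<Sum>i<n. S1.Xv w i)" for n w
    unfolding Wn_def S1.Xv_def by (simp add: sum.atLeast1_atMost_eq)
  define K0 where "K0 = max K 0 / s0 powr (2 + \<alpha>)"
  have K0: "K0 \<ge> 0" unfolding K0_def by simp
  define Mx where "Mx n = Max ((\<lambda>i. E (\<lambda>w. \<bar>X i w\<bar> powr (2 + \<alpha>)) / (sig E X i) powr (2 + \<alpha>)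
                          * (sig E X i / Bn E X n) powr \<alpha>) ` {1..n})" for n
  have term_le: "E (\<lambda>w. \<bar>X i w\<bar> powr (2 + \<alpha>)) / (sig E X i) powr (2 + \<alpha>) * (sig E X i / Bn E X n) powr \<alpha>
      \<le> K0 * (sig E X i / Bn E X n) powr \<alpha>" if "1 \<le> i" "i \<le> n" for i n
  proof (rule mult_right_mono)
    have "s0 powr (2 + \<alpha>) \<le> sig E X i powr (2 + \<alpha>)"
      by (rule powr_mono2) (use alpha sig_ge[OF that(1)] s0 in auto)
    moreover have "s0 powr (2 + \<alpha>) > 0" using s0 by simp
    ultimately show "E (\<lambda>w. \<bar>X i w\<bar> powr (2 + \<alpha>)) / (sig E X i) powr (2 + \<alpha>) \<le> K0" unfolding K0_def
      by (intro frac_le) (use K[OF that(1)] in auto)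
  qed simp
  have Mx_le1: "Mx n \<le> K0" and Mx_le2: "Mx n \<le> K0 * (s1 / (s0 * sqrt (real n))) powr \<alpha>" if n: "n \<ge> 1" for n
  proof -
    have ne: "{1..n} \<noteq> {}" using n by simp
    have "\<forall>i\<in>{1..n}. E (\<lambda>w. \<bar>X i w\<bar> powr (2 + \<alpha>)) / (sig E X i) powr (2 + \<alpha>) * (sig E X i / Bn E X n) powr \<alpha> \<le> K0"
    proof
      fix i assume i: "i \<in> {1..n}"
      have "(sig E X i / Bn E X n) powr \<alpha> \<le> 1"
        using sig_Bn[of i n] i sig_ge[of i] s0 Bn_pos[OF n] alpha
        by (intro powr_le1) (auto simp: divide_le_eq_1)
      then show "E (\<lambda>w. \<bar>X i w\<bar> powr (2 + \<alpha>)) / (sig E X i) powr (2 + \<alpha>) * (sig E X i / Bn E X n) powr \<alpha> \<le> K0"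
        using term_le[of i n] i K0 by (smt (verit) atLeastAtMost_iff mult_left_le)
    qed
    then show "Mx n \<le> K0" unfolding Mx_def using ne by (subst Max_le_iff) auto
    have "\<forall>i\<in>{1..n}. E (\<lambda>w. \<bar>X i w\<bar> powr (2 + \<alpha>)) / (sig E X i) powr (2 + \<alpha>) * (sig E X i / Bn E X n) powr \<alpha>
       \<le> K0 * (s1 / (s0 * sqrt (real n))) powr \<alpha>"
    proof
      fix i assume i: "i \<in> {1..n}"
      have "sig E X i / Bn E X n \<le> s1 / (s0 * sqrt (real n))"
        using sig_le[of i] sig_ge[of i] i s0 Bn_ge[of n] n
        by (intro frac_le) (auto simp: mult.commute)
      hence "(sig E X i / Bn E X n) powr \<alpha> \<le> (s1 / (s0 * sqrt (real n))) powr \<alpha>"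
        using sig_ge[of i] i s0 Bn_pos[OF n] alpha by (intro powr_mono2) auto
      then show "E (\<lambda>w. \<bar>X i w\<bar> powr (2 + \<alpha>)) / (sig E X i) powr (2 + \<alpha>) * (sig E X i / Bn E X n) powr \<alpha>
         \<le> K0 * (s1 / (s0 * sqrt (real n))) powr \<alpha>"
        using term_le[of i n] i K0 by (smt (verit) atLeastAtMost_iff mult_left_mono)
    qed
    then show "Mx n \<le> K0 * (s1 / (s0 * sqrt (real n))) powr \<alpha>" unfolding Mx_def using ne by (subst Max_le_iff) auto
  qed
  have songL: "\<bar>E (\<lambda>w. g (Wn E X n w)) - E' (\<lambda>w. g (\<xi> w))\<bar> \<le> Lg * Cs * Mx n"
    if n: "n \<ge> 1" and gB: "\<And>t. \<bar>g t\<bar> \<le> Bg" and Lg: "Lg > 0" and gL: "\<And>s t. \<bar>g s - g t\<bar> \<le> Lg * \<bar>s - t\<bar>" for n g Bg Lg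
  proof -
    define g1 where "g1 t = g t / Lg" for t
    have g1: "cbl1 g1 \<and> 1-lipschitz_on UNIV g1"
    proof (rule cbl1_lip1[of _ "Bg / Lg"])
      fix t show "\<bar>g1 t\<bar> \<le> Bg / Lg" unfolding g1_def using gB[of t] Lg by (simp add: divide_right_mono)
    next
      fix s t show "\<bar>g1 s - g1 t\<bar> \<le> \<bar>s - t\<bar>" unfolding g1_def using gL[of s t] Lg
        by (simp add: diff_divide_distrib[symmetric] pos_divide_le_eq mult.commute)
    qed
    have gg: "g t = Lg * g1 t" for t unfolding g1_def using Lg by simp
    have g1B: "\<bar>g1 t\<bar> \<le> Bg / Lg" for t unfolding g1_def using gB[of t] Lg by (simp add: divide_right_mono)
    have g1L: "\<bar>g1 s - g1 t\<bar> \<le> 1 * \<bar>s - t\<bar>" for s t unfolding g1_def using gL[of s t] Lg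
        by (simp add: diff_divide_distrib[symmetric] pos_divide_le_eq mult.commute)
    have H1: "(\<lambda>w. g1 (Wn E X n w)) \<in> H" unfolding Wn_eq by (rule S1.H_compW[OF g1B _ g1L]) simp
    have H2: "(\<lambda>w. g1 (\<xi> w)) \<in> H'" by (rule S2.H_comp1[OF xiH g1B _ g1L]) simp
    have "E (\<lambda>w. g (Wn E X n w)) = Lg * E (\<lambda>w. g1 (Wn E X n w))"
      unfolding gg by (rule S1.E_poshom[OF H1]) (use Lg in simp)
    moreover have "E' (\<lambda>w. g (\<xi> w)) = Lg * E' (\<lambda>w. g1 (\<xi> w))"
      unfolding gg by (rule S2.E_poshom[OF H2]) (use Lg in simp)
    moreover have "\<bar>E (\<lambda>w. g1 (Wn E X n w)) - E' (\<lambda>w. g1 (\<xi> w))\<bar> \<le> Cs * Mx n"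
      using songC[OF n g1] unfolding Mx_def .
    ultimately show ?thesis using Lg
      by (simp add: right_diff_distrib[symmetric] abs_mult mult.assoc mult_left_mono)
  qed

  have songf: "\<bar>E (\<lambda>w. f (Wn E X n w)) - E' (\<lambda>w. f (\<xi> w))\<bar> \<le> Lf * Cs * Mx n" if "n \<ge> 1" for n
    by (rule songL[OF that fB Lf fL])
  have nfL: "\<bar>- f s - - f t\<bar> \<le> Lf * \<bar>s - t\<bar>" for s t using fL[of s t] by linarith
  have nfB: "\<bar>- f t\<bar> \<le> Bf" for t using fB[of t] by simp
  have songnf: "\<bar>E (\<lambda>w. - f (Wn E X n w)) - E' (\<lambda>w. - f (\<xi> w))\<bar> \<le> Lf * Cs * Mx n" if "n \<ge> 1" for n
    by (rule songL[OF that nfB Lf nfL])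
  define Eq where "Eq = E' (\<lambda>w. (\<xi> w)\<^sup>2)"
  have "sqrt Eq > 0" unfolding Eq_def xi_up using beta by simp
  hence Eq: "Eq > 0" by simp
  define K1 where "K1 = (Eq + 1) / 2 + Cs * K0"
  have K1: "K1 \<ge> 0" unfolding K1_def using Eq Cs K0 by simp
  have Wn_eq2: "Wn E X n w = (\<Sum>i<n. S1.Xv w i) / Bn E X n" for n w
    unfolding Wn_eq by simp
  have delta: "E (\<lambda>w. min (Lf * \<bar>\<Sum>i<j. S1.Xv w i\<bar> / Bn E X k) (2 * Bf)) \<le> Lf * (Bn E X j / Bn E X k) * K1"
    if jk: "1 \<le> j" "j \<le> k" for j k
  proof -
    define r where "r = Bn E X j / Bn E X k"
    have bj: "Bn E X j > 0" and bk: "Bn E X k > 0" using Bn_pos jk by auto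
    have r: "r > 0" unfolding r_def using bj bk by simp
    define g where "g t = min (Lf * r * \<bar>t\<bar>) (2 * Bf)" for t
    have gB: "\<bar>g t\<bar> \<le> 2 * Bf" for t unfolding g_def using Lf r Bf by simp
    have gL: "\<bar>g s - g t\<bar> \<le> (Lf * r) * \<bar>s - t\<bar>" for s t
    proof -
      have "\<bar>Lf * r * \<bar>s\<bar> - Lf * r * \<bar>t\<bar>\<bar> = (Lf * r) * \<bar>\<bar>s\<bar> - \<bar>t\<bar>\<bar>"
        using Lf r by (simp add: right_diff_distrib[symmetric] abs_mult)
      also have "\<dots> \<le> (Lf * r) * \<bar>s - t\<bar>" using Lf r by (intro mult_left_mono abs_triangle_ineq3) auto
      finally show ?thesis unfolding g_def by linarith
    qed
    have Lr: "Lf * r > 0" using Lf r by simp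
    have eqw: "min (Lf * \<bar>\<Sum>i<j. S1.Xv w i\<bar> / Bn E X k) (2 * Bf) = g (Wn E X j w)" for w
    proof -
      have "Lf * r * \<bar>(\<Sum>i<j. S1.Xv w i) / Bn E X j\<bar> = Lf * \<bar>\<Sum>i<j. S1.Xv w i\<bar> / Bn E X k"
        unfolding r_def using bj bk by (simp add: abs_divide)
      then show ?thesis unfolding g_def Wn_eq2 by simp
    qed
    have s1': "\<bar>E (\<lambda>w. g (Wn E X j w)) - E' (\<lambda>w. g (\<xi> w))\<bar> \<le> (Lf * r) * Cs * Mx j"
      by (rule songL[OF jk(1) gB Lr gL])
    have Hq: "(\<lambda>w. (Lf * r / 2) * (\<xi> w)\<^sup>2 + Lf * r / 2) \<in> H'"
      by (rule S2.H_addc[OF S2.H_scale[OF xi2H]])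
    have "E' (\<lambda>w. g (\<xi> w)) \<le> E' (\<lambda>w. (Lf * r / 2) * (\<xi> w)\<^sup>2 + Lf * r / 2)"
    proof (rule S2.E_mono[OF S2.H_comp1[OF xiH gB _ gL] Hq])
      show "0 \<le> Lf * r" using Lr by simp
    next
      fix w
      have "\<bar>\<xi> w\<bar> \<le> (\<xi> w)\<^sup>2 / 2 + 1 / 2"
        using sum_squares_bound[of "\<bar>\<xi> w\<bar>" 1] by (simp add: power2_eq_square)
      hence "Lf * r * \<bar>\<xi> w\<bar> \<le> Lf * r * ((\<xi> w)\<^sup>2 / 2 + 1 / 2)" using Lr by (intro mult_left_mono) auto
      hence "g (\<xi> w) \<le> Lf * r * ((\<xi> w)\<^sup>2 / 2 + 1 / 2)" unfolding g_def by linarith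
      then show "g (\<xi> w) \<le> (Lf * r / 2) * (\<xi> w)\<^sup>2 + Lf * r / 2" by (simp add: algebra_simps)
    qed
    also have "\<dots> = (Lf * r / 2) * Eq + Lf * r / 2"
    proof -
      have a1: "E' (\<lambda>w. (Lf * r / 2) * (\<xi> w)\<^sup>2 + Lf * r / 2) = E' (\<lambda>w. (Lf * r / 2) * (\<xi> w)\<^sup>2) + Lf * r / 2"
        by (rule S2.E_add_const[OF S2.H_scale[OF xi2H]])
      have a2: "E' (\<lambda>w. (Lf * r / 2) * (\<xi> w)\<^sup>2) = (Lf * r / 2) * Eq"
        unfolding Eq_def by (rule S2.E_poshom[OF xi2H]) (use Lr in simp)
      show ?thesis using a1 a2 by simp
    qed
    finally have e1: "E' (\<lambda>w. g (\<xi> w)) \<le> (Lf * r / 2) * Eq + Lf * r / 2" .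
    have e2: "(Lf * r) * Cs * Mx j \<le> (Lf * r) * Cs * K0"
      using Mx_le1[OF jk(1)] Lr Cs by (intro mult_left_mono) auto
    have "E (\<lambda>w. min (Lf * \<bar>\<Sum>i<j. S1.Xv w i\<bar> / Bn E X k) (2 * Bf)) = E (\<lambda>w. g (Wn E X j w))"
      by (simp only: eqw)
    also have "\<dots> \<le> (Lf * r / 2) * Eq + Lf * r / 2 + (Lf * r) * Cs * K0" using s1' e1 e2 by linarith
    also have "\<dots> = Lf * r * K1" unfolding K1_def by (simp add: algebra_simps)
    finally show ?thesis unfolding r_def .
  qed
  define M3 where "M3 = 4 * Bf * Lf * K1 * (s1 / s0) + 1"
  define M4 where "M4 = 4 * Bf * Lf * Cs * K0 * (s1 / s0) powr \<alpha> + 1"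
  have M3: "M3 > 0" unfolding M3_def using Bf Lf K1 s0 s01 by (simp add: add_nonneg_pos)
  have M4: "M4 > 0" unfolding M4_def using Bf Lf K0 Cs by (simp add: add_nonneg_pos)
  show ?thesis
  proof (rule exI[of _ M3], rule conjI[OF M3], rule exI[of _ M4], rule conjI[OF M4], intro allI impI)
    fix j k :: nat assume jk: "1 \<le> j \<and> j \<le> k"
    hence j1: "1 \<le> j" and jk': "j \<le> k" and k1: "1 \<le> k" by auto
    have bj: "Bn E X j > 0" and bk: "Bn E X k > 0" using Bn_pos j1 k1 by auto
    define U where "U = K0 * (s1 / (s0 * sqrt (real k))) powr \<alpha>"
    have U: "U \<ge> 0" unfolding U_def using K0 by simp
    define \<epsilon> where "\<epsilon> = 2 * (Lf * Cs * U)"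
    have eps0: "\<epsilon> \<ge> 0" unfolding \<epsilon>_def using Lf Cs U by simp
    have MU: "Lf * Cs * Mx k \<le> Lf * Cs * U" unfolding U_def using Mx_le2[OF k1] Lf Cs by (intro mult_left_mono) auto
    have epsb: "E (\<lambda>w. - f ((\<Sum>i<k. S1.Xv w i) / Bn E X k)) + E (\<lambda>w. f ((\<Sum>i<k. S1.Xv w i) / Bn E X k)) \<le> \<epsilon>"
    proof -
      have "E (\<lambda>w. - f (Wn E X k w)) + E (\<lambda>w. f (Wn E X k w))
           \<le> E' (\<lambda>w. - f (\<xi> w)) + E' (\<lambda>w. f (\<xi> w)) + 2 * (Lf * Cs * Mx k)"
        using songf[OF k1] songnf[OF k1] by linarith
      also have "\<dots> = 2 * (Lf * Cs * Mx k)" using fsym by simp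
      also have "\<dots> \<le> \<epsilon>" unfolding \<epsilon>_def using MU by simp
      finally show ?thesis unfolding Wn_eq2 .
    qed
    note mb = S1.main_bound[OF fB Bf Lf fL j1 jk' bj bk refl refl epsb eps0]
    define \<delta> where "\<delta> = E (\<lambda>w. min (Lf * \<bar>\<Sum>i<j. S1.Xv w i\<bar> / Bn E X k) (2 * Bf))"
    have dl: "\<delta> \<le> Lf * (Bn E X j / Bn E X k) * K1" unfolding \<delta>_def by (rule delta[OF j1 jk'])
    have rb: "Bn E X j / Bn E X k \<le> (s1 / s0) * sqrt (real j / real k)"
    proof -
      have "Bn E X j / Bn E X k \<le> (sqrt (real j) * s1) / (sqrt (real k) * s0)"
        by (rule frac_le) (use Bn_le[of j] Bn_ge[of k] bj bk s0 s01 k1 in auto)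
      also have "\<dots> = (s1 / s0) * sqrt (real j / real k)" by (simp add: real_sqrt_divide mult.commute)
      finally show ?thesis .
    qed
    have Ueq: "U = K0 * (s1 / s0) powr \<alpha> * (1 / real k) powr (\<alpha> / 2)"
    proof -
      have "s1 / (s0 * sqrt (real k)) = (s1 / s0) * (1 / real k) powr (1/2)"
        using k1 by (simp add: powr_half_sqrt real_sqrt_divide)
      hence "(s1 / (s0 * sqrt (real k))) powr \<alpha> = ((s1 / s0) * (1 / real k) powr (1/2)) powr \<alpha>"
        by (simp only:)
      also have "\<dots> = (s1 / s0) powr \<alpha> * ((1 / real k) powr (1/2)) powr \<alpha>"
        by (rule powr_mult)
      also have "((1 / real k) powr (1/2)) powr \<alpha> = (1 / real k) powr (\<alpha> / 2)" by (simp add: powr_powr)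
      finally show ?thesis unfolding U_def by simp
    qed
    have "E (\<lambda>w. (f (Wn E X j w) - E (\<lambda>w'. f (Wn E X j w'))) * (f (Wn E X k w) - E (\<lambda>w'. f (Wn E X k w'))))
        \<le> 2 * Bf * (\<delta> + \<epsilon>) + 2 * Bf * \<delta>" using mb unfolding Wn_eq2 \<delta>_def .
    also have "\<dots> = 4 * Bf * \<delta> + 2 * Bf * \<epsilon>" by (simp add: algebra_simps)
    also have "\<dots> \<le> 4 * Bf * (Lf * ((s1 / s0) * sqrt (real j / real k)) * K1) + 2 * Bf * \<epsilon>"
    proof -
      have "Lf * (Bn E X j / Bn E X k) * K1 \<le> Lf * ((s1 / s0) * sqrt (real j / real k)) * K1"
        using rb Lf K1 by (intro mult_right_mono mult_left_mono) auto
      then show ?thesis using dl Bf by (intro add_right_mono mult_left_mono) auto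
    qed
    also have "\<dots> = (4 * Bf * Lf * K1 * (s1 / s0)) * sqrt (real j / real k)
        + (4 * Bf * Lf * Cs * K0 * (s1 / s0) powr \<alpha>) * (1 / real k) powr (\<alpha> / 2)"
      unfolding \<epsilon>_def Ueq by (simp add: algebra_simps)
    also have "\<dots> \<le> M3 * sqrt (real j / real k) + M4 * (1 / real k) powr (\<alpha> / 2)"
      unfolding M3_def M4_def by (intro add_mono mult_right_mono) auto
    finally have XX: "E (\<lambda>w. (f (Wn E X j w) - E (\<lambda>w'. f (Wn E X j w'))) * (f (Wn E X k w) - E (\<lambda>w'. f (Wn E X k w'))))
        \<le> M3 * sqrt (real j / real k) + M4 * (1 / real k) powr (\<alpha> / 2)" .
    then show "E (\<lambda>w. (f (Wn E X j w) - E (\<lambda>w'. f (Wn E X j w'))) * (f (Wn E X k w) - E (\<lambda>w'. f (Wn E X k w'))))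
        \<le> M3 * sqrt (real j / real k) + M4 * (1 / real k) powr (\<alpha> / 2)" .
  qed
qed


end
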